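(* Consider the ISQA framework described in the context for $\min_x F(x)=f(x)+\Psi(x)$, run with the stopping condition $\|r^t\|\le\epsilon_t$, and assume there are $M\ge m>0$ with $M I\succeq H_t\succeq mI$ for all $t$. Let $x^*$ satisfy $$0\in\operatorname{relint}\big(\partial F(x^* )\big)=\nabla f(x^* )+\operatorname{relint}\big(\partial\Psi(x^* )\big),$$ with $\Psi$ partly smooth at $x^*$ relative to some manifold $\mathcal{M}$, and assume $f$ is $L$-smooth (gradient $L$-Lipschitz) in a neighborhood of $x^*$ for some $L>0$. Then there exist $\epsilon,\delta>0$ such that, for any iteration $t$, if $\|x^t-x^*\|\le\delta$, $\epsilon_t\le\epsilon$ and $\alpha_t=1$, then $x^{t+1}\in\mathcal{M}$.
   Context: Standing setting: $\mathcal{H}$ is a Euclidean space; $f:\mathcal{H}\to\mathbb{R}$ is continuously differentiable with Lipschitz gradient; $\Psi:\mathcal{H}\to(-\infty,\infty]$ is convex, proper, lower semicontinuous; $F=f+\Psi$ has a nonempty solution set. $\partial F(x)=\nabla f(x)+\partial\Psi(x)$; $\operatorname{relint}$ is relative interior. ISQA framework: given $x^0\in\mathcal{H}$ and $\gamma,\beta\in(0,1)$, for $t=0,1,\dots$: choose a self-adjoint positive semidefinite linear operator $H_t$ on $\mathcal{H}$ and $\epsilon_t\ge0$; let $Q_t(p):=\langle\nabla f(x^t),p\rangle+\tfrac12\langle p,H_tp\rangle+\Psi(x^t+p)-\Psi(x^t)$; compute $p^t$ with $\|r^t\|\le\epsilon_t$, where $r^t$ is the minimum-norm element of $\partial_pQ_t(p^t)$;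 let $\alpha_t$ be the largest element of $\{1,\beta,\beta^2,\dots\}$ with $F(x^t+\alpha_tp^t)\le F(x^t)+\gamma\alpha_tQ_t(p^t)$; set $x^{t+1}=x^t+\alpha_tp^t$. Manifolds and partial smoothness: $\mathcal{M}$ is a $p$-dimensional $\mathcal{C}^k$ manifold around $x$ if near $x$ it is the zero set of a $\mathcal{C}^k$ map $\Phi:\mathcal{H}\to\mathbb{R}^{\dim\mathcal{H}-p}$ with surjective derivative at $x$. $\Psi$ is partly smooth at $x^*$ relative to $\mathcal{M}\ni x^*$ if $\partial\Psi(x^* )\ne\emptyset$ and (i) near $x^*$, $\mathcal{M}$ is a $\mathcal{C}^2$ manifold and $\Psi|_{\mathcal{M}}$ is $\mathcal{C}^2$; (ii) the affine span of $\partial\Psi(x^* )$ is a translate of the normal space to $\mathcal{M}$ at $x^*$; (iii) $\partial\Psi$ is continuous at $x^*$ relative to $\mathcal{M}$; (iv) $\Psi$ is regular at points of $\mathcal{M}$ near $x^*$ with nonempty subdifferential. *)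

theory Defs
  imports "HOL-Analysis.Analysis"
begin

definition proper_fun :: "('a \<Rightarrow> ereal) \<Rightarrow> bool" where
  "proper_fun \<Psi> \<longleftrightarrow> (\<forall>x. \<Psi> x \<noteq> -\<infinity>) \<and> (\<exists>x. \<Psi> x < \<infinity>)"

definition convex_ext :: "('a::real_vector \<Rightarrow> ereal) \<Rightarrow> bool" where
  "convex_ext \<Psi> \<longleftrightarrow> (\<forall>x y u. 0 \<le> u \<and> u \<le> 1 \<longrightarrow>
      \<Psi> (u *\<^sub>R x + (1 - u) *\<^sub>R y) \<le> ereal u * \<Psi> x + ereal (1 - u) * \<Psi> y)"

definition lsc_ext :: "('a::topological_space \<Rightarrow> ereal) \<Rightarrow> bool" where
  "lsc_ext \<Psi> \<longleftrightarrow> (\<forall>x X. X \<longlonglongrightarrow> x \<longrightarrow> \<Psi> x \<le> liminf (\<lambda>n. \<Psi> (X n)))"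

text \<open>Convex subdifferential (empty outside the effective domain).\<close>
definition subdiff :: "('a::real_inner \<Rightarrow> ereal) \<Rightarrow> 'a \<Rightarrow> 'a set" where
  "subdiff \<Psi> x = {g. \<bar>\<Psi> x\<bar> < \<infinity> \<and> (\<forall>y. \<Psi> y \<ge> \<Psi> x + ereal (g \<bullet> (y - x)))}"

definition min_norm_elem :: "'a::real_normed_vector \<Rightarrow> 'a set \<Rightarrow> bool" where
  "min_norm_elem r S \<longleftrightarrow> r \<in> S \<and> (\<forall>g\<in>S. norm r \<le> norm g)"

definition C2_on :: "'a set \<Rightarrow> ('a::euclidean_space \<Rightarrow> real) \<Rightarrow> bool" where
  "C2_on U g \<longleftrightarrow> (\<exists>G :: 'a \<Rightarrow> 'a. \<exists>G2 :: 'a \<Rightarrow> ('a \<Rightarrow>\<^sub>L 'a).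
      (\<forall>y\<in>U. (g has_derivative (\<lambda>h. G y \<bullet> h)) (at y)) \<and>
      (\<forall>y\<in>U. (G has_derivative blinfun_apply (G2 y)) (at y)) \<and>
      continuous_on U G2)"

text \<open>Local chart of a C^2 manifold of dimension DIM('a) - d around x:
  near x (on the open neighbourhood U), M is the zero set of
  \<Phi> = (\<Phi> 0, ..., \<Phi> (d-1)) : H \<rightarrow> R^d, each component C^2, with surjective
  derivative at x.\<close>
definition C2_manifold_chart ::
  "'a::euclidean_space set \<Rightarrow> 'a \<Rightarrow> 'a set \<Rightarrow> nat \<Rightarrow> (nat \<Rightarrow> 'a \<Rightarrow> real) \<Rightarrow> bool" where
  "C2_manifold_chart M x U d \<Phi> \<longleftrightarrow>
     open U \<and> x \<in> U \<and> d \<le> DIM('a) \<and>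
     (\<forall>i<d. C2_on U (\<Phi> i)) \<and>
     M \<inter> U = {y\<in>U. \<forall>i<d. \<Phi> i y = 0} \<and>
     (\<forall>v :: nat \<Rightarrow> real. \<exists>h. \<forall>i<d. frechet_derivative (\<Phi> i) (at x) h = v i)"

text \<open>Tangent space of M at x computed from a chart: the kernel of the derivative of \<Phi>;
  the normal space is its orthogonal complement.\<close>
definition chart_normal_space :: "'a::euclidean_space \<Rightarrow> nat \<Rightarrow> (nat \<Rightarrow> 'a \<Rightarrow> real) \<Rightarrow> 'a set" where
  "chart_normal_space x d \<Phi> =
     {v. \<forall>h. (\<forall>i<d. frechet_derivative (\<Phi> i) (at x) h = 0) \<longrightarrow> v \<bullet> h = 0}"

text \<open>Continuity of the set-valued map \<partial>\<Psi> at x relative to M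
  (Painleve-Kuratowski: outer and inner semicontinuity along M).\<close>
definition subdiff_continuous_rel :: "('a::euclidean_space \<Rightarrow> ereal) \<Rightarrow> 'a \<Rightarrow> 'a set \<Rightarrow> bool" where
  "subdiff_continuous_rel \<Psi> x M \<longleftrightarrow>
     (\<forall>y v w. (\<forall>k. y k \<in> M \<and> v k \<in> subdiff \<Psi> (y k)) \<and> y \<longlonglongrightarrow> x \<and> v \<longlonglongrightarrow> w
         \<longrightarrow> w \<in> subdiff \<Psi> x) \<and>
     (\<forall>y. (\<forall>k. y k \<in> M) \<and> y \<longlonglongrightarrow> x \<longrightarrow>
         (\<forall>w\<in>subdiff \<Psi> x. \<exists>v. v \<longlonglongrightarrow> w \<and> (\<forall>\<^sub>F k in sequentially. v k \<in> subdiff \<Psi> (y k))))"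

text \<open>Partial smoothness of \<Psi> at x relative to M (Lewis).  \<Psi>|M being C^2 near x is
  rendered as: \<Psi> is finite on M near x and agrees there with a C^2 function.
  Regularity in (iv) is automatic for convex proper lsc \<Psi> at points with nonempty
  subdifferential, so only nonemptiness is recorded.\<close>
definition partly_smooth :: "('a::euclidean_space \<Rightarrow> ereal) \<Rightarrow> 'a \<Rightarrow> 'a set \<Rightarrow> bool" where
  "partly_smooth \<Psi> x M \<longleftrightarrow> x \<in> M \<and> subdiff \<Psi> x \<noteq> {} \<and>
     (\<exists>U d \<Phi>. C2_manifold_chart M x U d \<Phi> \<and>
        (\<exists>g. C2_on U g \<and> (\<forall>y\<in>M \<inter> U. \<Psi> y = ereal (g y))) \<and>
        (\<exists>a. affine hull (subdiff \<Psi> x) = (\<lambda>v. a + v) ` chart_normal_space x d \<Phi>)) \<and>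
     subdiff_continuous_rel \<Psi> x M \<and>
     (\<exists>V. open V \<and> x \<in> V \<and> (\<forall>y\<in>M \<inter> V. subdiff \<Psi> y \<noteq> {}))"

definition isqa_Q :: "('a::real_inner \<Rightarrow> 'a) \<Rightarrow> ('a \<Rightarrow> ereal) \<Rightarrow> 'a \<Rightarrow> ('a \<Rightarrow> 'a) \<Rightarrow> 'a \<Rightarrow> ereal" where
  "isqa_Q gradf \<Psi> xt Ht p =
     ereal (gradf xt \<bullet> p + (1/2) * (p \<bullet> Ht p)) + \<Psi> (xt + p) - \<Psi> xt"

end

theory Submission
  imports Defs "HOL-Analysis.Analysis"
begin

lemma quad_cs:
  fixes a b c :: real
  assumes "\<And>t. 0 \<le> a + 2*t*b + t^2*c" and "0 \<le> c"
  shows "b^2 \<le> a*c"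
proof (cases "c = 0")
  case True
  have "b = 0"
  proof (rule ccontr)
    assume "b \<noteq> 0"
    have "0 \<le> a + 2*(-(a+1)/(2*b))*b" using assms(1)[of "-(a+1)/(2*b)"] True by simp
    also have "\<dots> = -1" using \<open>b \<noteq> 0\<close> by (simp add: field_simps)
    finally show False by simp
  qed
  then show ?thesis using True assms(1)[of 0] by simp
next
  case False
  have c0: "c > 0"
    using False assms(2) by simp
  have "0 \<le> a + 2*(-b/c)*b + (-b/c)^2*c" using assms(1) by blast
  also have "\<dots> = (a*c - b^2)/c" using False by (simp add: field_simps power2_eq_square)
  finally show ?thesis using c0 by (simp add: divide_nonneg_pos zero_le_divide_iff)
qed

lemma psd_cs:
  fixes A :: "'a::real_inner \<Rightarrow> 'a"
  assumes lin: "linear A" and sym: "\<And>u v. A u \<bullet> v = u \<bullet> A v" and psd: "\<And>v. 0 \<le> v \<bullet> A v"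
  shows "(u \<bullet> A w)^2 \<le> (u \<bullet> A u) * (w \<bullet> A w)"
proof (rule quad_cs)
  fix t :: real
  have "0 \<le> (u + t *\<^sub>R w) \<bullet> A (u + t *\<^sub>R w)" by (rule psd)
  also have "\<dots> = u \<bullet> A u + t * (u \<bullet> A w) + t * (w \<bullet> A u) + t^2 * (w \<bullet> A w)"
    by (simp add: linear_add[OF lin] linear_scale[OF lin] inner_add_left inner_add_right power2_eq_square algebra_simps)
  also have "w \<bullet> A u = u \<bullet> A w" by (metis sym inner_commute)
  finally show "0 \<le> u \<bullet> A u + 2 * t * (u \<bullet> A w) + t\<^sup>2 * (w \<bullet> A w)" by simp
qed (rule psd)

lemma psd_norm_bound:
  fixes A :: "'a::real_inner \<Rightarrow> 'a"
  assumes lin: "linear A" and sym: "\<And>u v. A u \<bullet> v = u \<bullet> A v" and psd: "\<And>v. 0 \<le> v \<bullet> A v"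
    and bnd: "\<And>v. v \<bullet> A v \<le> M * (v \<bullet> v)" and M0: "0 \<le> M"
  shows "norm (A v) \<le> M * norm v"
proof (cases "A v = 0")
  case True then show ?thesis using M0 by simp
next
  case False
  have "(A v \<bullet> A v)^2 \<le> (A v \<bullet> A (A v)) * (v \<bullet> A v)"
    using psd_cs[OF lin sym psd, of "A v" v] by simp
  also have "\<dots> \<le> (M * (A v \<bullet> A v)) * (M * (v \<bullet> v))"
    by (intro mult_mono bnd psd) (use M0 in auto)
  finally have "(norm (A v))^2 * (norm (A v))^2 \<le> (norm (A v))^2 * (M^2 * (norm v)^2)"
    by (simp add: power2_norm_eq_inner[symmetric] power2_eq_square algebra_simps)
  moreover have "0 < (norm (A v))^2" using False by simp
  ultimately have "(norm (A v))^2 \<le> M^2 * (norm v)^2"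
    by (metis mult_le_cancel_left_pos)
  then have "(norm (A v))^2 \<le> (M * norm v)^2" by (simp add: power_mult_distrib)
  then show ?thesis using M0 by (simp add: power2_le_iff_abs_le)
qed


lemma limit_small_s:
  fixes X Y c :: real
  assumes "\<And>s. 0 < s \<Longrightarrow> s \<le> 1 \<Longrightarrow> Y - s * c \<le> X" and "0 \<le> c"
  shows "Y \<le> X"
proof (rule ccontr)
  assume "\<not> Y \<le> X"
  then have g: "0 < Y - X" by simp
  define s where "s = min 1 ((Y - X) / (2 * c + 1))"
  have s0: "0 < s" using g assms(2) by (simp add: s_def)
  have s1: "s \<le> 1" by (simp add: s_def)
  have "s * c \<le> ((Y - X) / (2 * c + 1)) * c" unfolding s_def by (rule mult_right_mono[OF min.cobounded2 assms(2)])
  also have "\<dots> < Y - X"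
  proof -
    have "(Y - X) * c < (Y - X) * (2 * c + 1)" using g assms(2) by (intro mult_strict_left_mono) auto
    then show ?thesis using assms(2) by (simp add: field_simps)
  qed
  finally show False using assms(1)[OF s0 s1] by simp
qed

lemma Q_subgrad:
  fixes gradf :: "'a::real_inner \<Rightarrow> 'a" and \<Psi> :: "'a \<Rightarrow> ereal" and Hh :: "'a \<Rightarrow> 'a"
  assumes conv: "convex_ext \<Psi>" and proper: "proper_fun \<Psi>"
    and lin: "linear Hh" and sym: "\<And>u v. Hh u \<bullet> v = u \<bullet> Hh v" and psd: "\<And>v. 0 \<le> v \<bullet> Hh v"
    and fin: "\<bar>\<Psi> xt\<bar> < \<infinity>"
    and r: "r \<in> subdiff (isqa_Q gradf \<Psi> xt Hh) p"
  shows "r - gradf xt - Hh p \<in> subdiff \<Psi> (xt + p)"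
proof -
  define \<phi> where "\<phi> w = gradf xt \<bullet> w + (1/2) * (w \<bullet> Hh w)" for w
  have Qdef: "isqa_Q gradf \<Psi> xt Hh w = ereal (\<phi> w) + \<Psi> (xt + w) - \<Psi> xt" for w
    by (simp add: isqa_Q_def \<phi>_def)
  obtain C where C: "\<Psi> xt = ereal C" using fin by (cases "\<Psi> xt") auto
  from r have Qfin: "\<bar>isqa_Q gradf \<Psi> xt Hh p\<bar> < \<infinity>"
    and Qsub: "\<And>w. isqa_Q gradf \<Psi> xt Hh w \<ge> isqa_Q gradf \<Psi> xt Hh p + ereal (r \<bullet> (w - p))"
    by (auto simp: subdiff_def)
  have nm: "\<And>y. \<Psi> y \<noteq> -\<infinity>" using proper by (simp add: proper_fun_def)
  obtain A where A: "\<Psi> (xt + p) = ereal A"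
  proof (cases "\<Psi> (xt + p)")
    case (real a) then show ?thesis using that by simp
  next
    case PInf then show ?thesis using Qfin by (simp add: Qdef C)
  next
    case MInf then show ?thesis using nm by simp
  qed
  have QpA: "isqa_Q gradf \<Psi> xt Hh p = ereal (\<phi> p + A - C)" by (simp add: Qdef A C)
  define u where "u = r - gradf xt - Hh p"
  have "\<Psi> z \<ge> \<Psi> (xt + p) + ereal (u \<bullet> (z - (xt + p)))" for z
  proof (cases "\<Psi> z")
    case PInf then show ?thesis by simp
  next
    case MInf then show ?thesis using nm by simp
  next
    case (real B)
    define \<delta> where "\<delta> = z - (xt + p)"
    define c where "c = \<delta> \<bullet> Hh \<delta>"
    have c0: "0 \<le> c" using psd by (simp add: c_def)
    have key: "u \<bullet> \<delta> - s * c \<le> B - A" if s0: "0 < s" and s1: "s \<le> 1" for s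
    proof -
      define w where "w = p + s *\<^sub>R \<delta>"
      have xw: "xt + w = s *\<^sub>R z + (1 - s) *\<^sub>R (xt + p)"
        by (simp add: w_def \<delta>_def algebra_simps)
      have "\<Psi> (xt + w) \<le> ereal s * \<Psi> z + ereal (1 - s) * \<Psi> (xt + p)"
        using conv s0 s1 unfolding convex_ext_def xw by simp
      also have "\<dots> = ereal (s * B + (1 - s) * A)" by (simp add: real A)
      finally have le: "\<Psi> (xt + w) \<le> ereal (s * B + (1 - s) * A)" .
      obtain D where D: "\<Psi> (xt + w) = ereal D" using le nm[of "xt + w"] by (cases "\<Psi> (xt + w)") auto
      have DD: "D \<le> s * B + (1 - s) * A" using le D by simp
      have "ereal (\<phi> w + D - C) \<ge> ereal (\<phi> p + A - C) + ereal (r \<bullet> (w - p))"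
        using Qsub[of w] by (simp add: Qdef D QpA[symmetric] C)
      then have ineq: "\<phi> w + D - C \<ge> \<phi> p + A - C + s * (r \<bullet> \<delta>)" by (simp add: w_def)
      have Hw: "Hh w = Hh p + s *\<^sub>R Hh \<delta>" by (simp add: w_def linear_add[OF lin] linear_scale[OF lin])
      have sp: "\<delta> \<bullet> Hh p = p \<bullet> Hh \<delta>" by (metis sym inner_commute)
      have "\<phi> w - \<phi> p = s * (gradf xt \<bullet> \<delta>) + s * (p \<bullet> Hh \<delta>) + (1/2) * s^2 * c"
        unfolding \<phi>_def Hw by (simp add: w_def c_def inner_add_left inner_add_right sp power2_eq_square algebra_simps)
      also have "p \<bullet> Hh \<delta> = Hh p \<bullet> \<delta>" by (simp add: sym)
      finally have "s * (r \<bullet> \<delta>) \<le> s * (gradf xt \<bullet> \<delta>) + s * (Hh p \<bullet> \<delta>) + (1/2) * s^2 * c + s * B + (1 - s) * A - A"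
        using ineq DD by linarith
      then have "s * (r \<bullet> \<delta>) \<le> s * ((gradf xt \<bullet> \<delta>) + (Hh p \<bullet> \<delta>) + (1/2) * s * c + B - A)"
        by (simp add: power2_eq_square algebra_simps)
      then have "r \<bullet> \<delta> \<le> (gradf xt \<bullet> \<delta>) + (Hh p \<bullet> \<delta>) + (1/2) * s * c + B - A"
        using s0 by simp
      moreover have "u \<bullet> \<delta> = r \<bullet> \<delta> - gradf xt \<bullet> \<delta> - Hh p \<bullet> \<delta>" by (simp add: u_def inner_diff_left)
      moreover have "(1/2) * s * c \<le> s * c" using s0 c0 by simp
      ultimately show ?thesis by linarith
    qed
    have "u \<bullet> \<delta> \<le> B - A" by (rule limit_small_s[OF key c0])
    then show ?thesis by (simp add: real A \<delta>_def)
  qed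
  then show ?thesis using A by (simp add: subdiff_def u_def)
qed


lemma subdiff_mono:
  assumes "u \<in> subdiff \<Psi> y" "w \<in> subdiff \<Psi> z"
  shows "0 \<le> (u - w) \<bullet> (y - z)"
proof -
  obtain a where a: "\<Psi> y = ereal a" using assms(1) unfolding subdiff_def by (cases "\<Psi> y") auto
  obtain b where b: "\<Psi> z = ereal b" using assms(2) unfolding subdiff_def by (cases "\<Psi> z") auto
  from assms have "\<Psi> z \<ge> \<Psi> y + ereal (u \<bullet> (z - y))" "\<Psi> y \<ge> \<Psi> z + ereal (w \<bullet> (y - z))"
    unfolding subdiff_def by auto
  then have "b \<ge> a + u \<bullet> (z - y)" "a \<ge> b + w \<bullet> (y - z)" using a b by auto
  moreover have "u \<bullet> (z - y) = - (u \<bullet> (y - z))" by (simp add: inner_diff_right)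
  ultimately show ?thesis by (simp add: inner_diff_left)
qed

lemma isqa_bounds:
  fixes gradf :: "'a::real_inner \<Rightarrow> 'a" and Hh :: "'a \<Rightarrow> 'a"
  assumes lin: "linear Hh" and sym: "\<And>u v. Hh u \<bullet> v = u \<bullet> Hh v" and psd: "\<And>v. 0 \<le> v \<bullet> Hh v"
    and m0: "0 < m" and M0: "0 \<le> M"
    and mb: "\<And>v. m * (v \<bullet> v) \<le> v \<bullet> Hh v" and Mb: "\<And>v. v \<bullet> Hh v \<le> M * (v \<bullet> v)"
    and Lg0: "0 \<le> Lg" and lip: "\<And>u v. norm (gradf u - gradf v) \<le> Lg * norm (u - v)"
    and usub: "r - gradf xt - Hh p \<in> subdiff \<Psi> (xt + p)"
    and gs: "- gradf xs \<in> subdiff \<Psi> xs"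
  shows "m * norm (xt + p - xs) \<le> norm r + (Lg + M) * norm (xt - xs)"
    and "norm ((r - gradf xt - Hh p) - (- gradf xs)) \<le> norm r + Lg * norm (xt - xs) + M * (norm (xt + p - xs) + norm (xt - xs))"
proof -
  define e where "e = xt + p - xs"
  define dd where "dd = xt - xs"
  have pe: "p = e - dd" by (simp add: e_def dd_def)
  have HB: "\<And>v. norm (Hh v) \<le> M * norm v" by (rule psd_norm_bound[OF lin sym psd Mb M0])
  have eq: "(r - gradf xt - Hh p) - (- gradf xs) = (r - (gradf xt - gradf xs) + Hh dd) - Hh e"
    by (simp add: pe linear_diff[OF lin] algebra_simps)
  have "0 \<le> ((r - gradf xt - Hh p) - (- gradf xs)) \<bullet> e"
    using subdiff_mono[OF usub gs] by (simp add: e_def)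
  then have "0 \<le> ((r - (gradf xt - gradf xs) + Hh dd) - Hh e) \<bullet> e" by (simp only: eq)
  then have "Hh e \<bullet> e \<le> (r - (gradf xt - gradf xs) + Hh dd) \<bullet> e"
    by (simp add: inner_diff_left)
  then have "e \<bullet> Hh e \<le> (r - (gradf xt - gradf xs) + Hh dd) \<bullet> e"
    by (simp add: inner_commute)
  also have "\<dots> \<le> norm (r - (gradf xt - gradf xs) + Hh dd) * norm e" by (rule norm_cauchy_schwarz)
  also have "norm (r - (gradf xt - gradf xs) + Hh dd) \<le> norm r + (Lg + M) * norm dd"
  proof -
    have "norm (r - (gradf xt - gradf xs) + Hh dd) \<le> norm (r - (gradf xt - gradf xs)) + norm (Hh dd)"
      by (rule norm_triangle_ineq)
    also have "norm (r - (gradf xt - gradf xs)) \<le> norm r + norm (gradf xt - gradf xs)"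
      by (rule norm_triangle_ineq4)
    finally show ?thesis using lip[of xt xs] HB[of dd] by (simp add: dd_def distrib_right)
  qed
  finally have X: "e \<bullet> Hh e \<le> (norm r + (Lg + M) * norm dd) * norm e"
    by (simp add: mult_right_mono)
  have "m * (e \<bullet> e) \<le> (norm r + (Lg + M) * norm dd) * norm e"
    by (rule order.trans[OF mb X])
  then have "m * norm e * norm e \<le> (norm r + (Lg + M) * norm dd) * norm e"
    by (simp add: power2_norm_eq_inner[symmetric] power2_eq_square mult.assoc)
  then show "m * norm (xt + p - xs) \<le> norm r + (Lg + M) * norm (xt - xs)"
    unfolding e_def[symmetric] dd_def[symmetric]
    by (cases "norm e = 0") (auto simp: Lg0 M0 mult_le_cancel_right_pos intro: add_nonneg_nonneg)
  have "(r - gradf xt - Hh p) - (- gradf xs) = r - (gradf xt - gradf xs) - Hh p" by simp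
  then have "norm ((r - gradf xt - Hh p) - (- gradf xs)) \<le> norm r + norm (gradf xt - gradf xs) + norm (Hh p)"
    by (metis norm_triangle_ineq4 add_right_mono order.trans)
  also have "\<dots> \<le> norm r + Lg * norm dd + M * norm p" using lip[of xt xs] HB[of p] by (simp add: dd_def)
  finally have Y: "norm ((r - gradf xt - Hh p) - (- gradf xs)) \<le> norm r + Lg * norm dd + M * norm p" .
  have "norm p \<le> norm e + norm dd" unfolding pe by (rule norm_triangle_ineq4)
  from Y this show "norm ((r - gradf xt - Hh p) - (- gradf xs)) \<le> norm r + Lg * norm (xt - xs) + M * (norm (xt + p - xs) + norm (xt - xs))"
    using M0 mult_left_mono[OF \<open>norm p \<le> norm e + norm dd\<close> M0] unfolding e_def[symmetric] dd_def[symmetric] by linarith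
qed


lemma dual_sum:
  fixes g b :: "nat \<Rightarrow> 'a::real_inner"
  assumes "\<And>i j. i < d \<Longrightarrow> j < d \<Longrightarrow> g j \<bullet> b i = (if j = i then 1 else 0)" "j < d"
  shows "g j \<bullet> (\<Sum>i<d. c i *\<^sub>R b i) = c j"
proof -
  have "g j \<bullet> (\<Sum>i<d. c i *\<^sub>R b i) = (\<Sum>i<d. c i * (if j = i then 1 else 0))"
    by (simp add: inner_sum_right assms(1) assms(2))
  also have "\<dots> = c j" using assms(2) by (simp add: if_distrib sum.delta cong: if_cong)
  finally show ?thesis .
qed

lemma mvt_lin:
  fixes \<phi> :: "'a::euclidean_space \<Rightarrow> real"
  assumes S: "convex S" and der: "\<And>\<xi>. \<xi> \<in> S \<Longrightarrow> (\<phi> has_derivative (\<lambda>h. G \<xi> \<bullet> h)) (at \<xi>)"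
    and bnd: "\<And>\<xi>. \<xi> \<in> S \<Longrightarrow> norm (G \<xi> - g) \<le> \<eta>" and a1: "a1 \<in> S" and a2: "a2 \<in> S"
  shows "\<bar>\<phi> a1 - \<phi> a2 - g \<bullet> (a1 - a2)\<bar> \<le> \<eta> * norm (a1 - a2)"
proof -
  have "norm ((\<lambda>y. \<phi> y - g \<bullet> y) a1 - (\<lambda>y. \<phi> y - g \<bullet> y) a2) \<le> \<eta> * norm (a1 - a2)"
  proof (rule differentiable_bound[OF S _ _ a1 a2])
    fix \<xi> assume "\<xi> \<in> S"
    show "((\<lambda>y. \<phi> y - g \<bullet> y) has_derivative (\<lambda>h. G \<xi> \<bullet> h - g \<bullet> h)) (at \<xi> within S)"
      by (rule has_derivative_diff[OF has_derivative_at_withinI[OF der[OF \<open>\<xi> \<in> S\<close>]]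
          bounded_linear_imp_has_derivative[OF bounded_linear_inner_right]])
    show "onorm (\<lambda>h. G \<xi> \<bullet> h - g \<bullet> h) \<le> \<eta>"
    proof (rule onorm_le)
      fix h
      have "norm (G \<xi> \<bullet> h - g \<bullet> h) = \<bar>(G \<xi> - g) \<bullet> h\<bar>" by (simp add: inner_diff_left)
      also have "\<dots> \<le> norm (G \<xi> - g) * norm h" by (rule Cauchy_Schwarz_ineq2)
      also have "\<dots> \<le> \<eta> * norm h" by (rule mult_right_mono[OF bnd[OF \<open>\<xi> \<in> S\<close>] norm_ge_zero])
      finally show "norm (G \<xi> \<bullet> h - g \<bullet> h) \<le> \<eta> * norm h" .
    qed
  qed
  then show ?thesis by (simp add: inner_diff_right algebra_simps)
qed


lemma chart_correction:
  fixes \<Phi> :: "nat \<Rightarrow> 'a::euclidean_space \<Rightarrow> real"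
  assumes ch: "C2_manifold_chart Mf xs U d \<Phi>" and xsM: "xs \<in> Mf"
  shows "\<exists>S. subspace S \<and> S \<subseteq> chart_normal_space xs d \<Phi> \<and>
           (\<forall>\<epsilon>>0. \<exists>\<rho>>0. \<forall>y\<in>ball xs \<rho>. \<exists>n\<in>S. y + n \<in> Mf \<and> norm n < \<epsilon>)"
proof -
  from ch have openU: "open U" and xsU: "xs \<in> U" and C2: "\<And>i. i < d \<Longrightarrow> C2_on U (\<Phi> i)"
    and MU: "Mf \<inter> U = {y\<in>U. \<forall>i<d. \<Phi> i y = 0}"
    and surj: "\<And>v. \<exists>h. \<forall>i<d. frechet_derivative (\<Phi> i) (at xs) h = v i"
    unfolding C2_manifold_chart_def by auto
  have "\<forall>i. \<exists>G. i < d \<longrightarrow> ((\<forall>y\<in>U. (\<Phi> i has_derivative (\<lambda>h. G y \<bullet> h)) (at y)) \<and> continuous_on U G)"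
  proof
    fix i
    show "\<exists>G. i < d \<longrightarrow> ((\<forall>y\<in>U. (\<Phi> i has_derivative (\<lambda>h. G y \<bullet> h)) (at y)) \<and> continuous_on U G)"
    proof (cases "i < d")
      case True
      from C2[OF True] obtain G :: "'a \<Rightarrow> 'a" and G2 where
        G: "\<forall>y\<in>U. (\<Phi> i has_derivative (\<lambda>h. G y \<bullet> h)) (at y)"
        and G2: "\<forall>y\<in>U. (G has_derivative blinfun_apply (G2 y)) (at y)"
        unfolding C2_on_def by blast
      have "continuous_on U G"
        by (rule continuous_at_imp_continuous_on) (use G2 has_derivative_continuous in blast)
      then show ?thesis using G by blast
    qed simp
  qed
  then obtain GG :: "nat \<Rightarrow> 'a \<Rightarrow> 'a" where
    GG: "\<And>i. i < d \<Longrightarrow> (\<forall>y\<in>U. (\<Phi> i has_derivative (\<lambda>h. GG i y \<bullet> h)) (at y)) \<and> continuous_on U (GG i)"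
    by metis
  define g where "g i = GG i xs" for i
  have fd: "frechet_derivative (\<Phi> i) (at xs) h = g i \<bullet> h" if "i < d" for i h
  proof -
    have "(\<lambda>h. GG i xs \<bullet> h) = frechet_derivative (\<Phi> i) (at xs)"
      by (rule frechet_derivative_at) (use GG[OF that] xsU in blast)
    then show ?thesis by (metis g_def)
  qed
  define S where "S = span (g ` {..<d})"
  have subS: "subspace S" by (simp add: S_def subspace_span)
  have SN: "S \<subseteq> chart_normal_space xs d \<Phi>"
  proof
    fix v assume v: "v \<in> S"
    show "v \<in> chart_normal_space xs d \<Phi>"
      unfolding chart_normal_space_def
    proof (intro CollectI allI impI)
      fix h assume h: "\<forall>i<d. frechet_derivative (\<Phi> i) (at xs) h = 0"
      have "orthogonal h v"
        by (rule orthogonal_to_span[OF v[unfolded S_def]]) (use h fd in \<open>auto simp: orthogonal_def inner_commute\<close>)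
      then show "v \<bullet> h = 0" by (simp add: orthogonal_def inner_commute)
    qed
  qed
  have "\<forall>i. \<exists>bi. i < d \<longrightarrow> bi \<in> S \<and> (\<forall>j<d. g j \<bullet> bi = (if j = i then 1 else 0))"
  proof
    fix i
    show "\<exists>bi. i < d \<longrightarrow> bi \<in> S \<and> (\<forall>j<d. g j \<bullet> bi = (if j = i then 1 else 0))"
    proof (cases "i < d")
      case True
      obtain h where h: "\<forall>j<d. frechet_derivative (\<Phi> j) (at xs) h = (if j = i then 1 else 0)"
        using surj[of "\<lambda>j. if j = i then 1 else 0"] by blast
      obtain y z where y: "y \<in> span (g ` {..<d})" and z: "\<And>w. w \<in> span (g ` {..<d}) \<Longrightarrow> orthogonal z w"
        and hyz: "h = y + z"
        by (rule orthogonal_subspace_decomp_exists[of "g ` {..<d}" h]) blast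
      have "g j \<bullet> y = (if j = i then 1 else 0)" if "j < d" for j
      proof -
        have "orthogonal z (g j)" using z that by (auto intro: span_base)
        then have "g j \<bullet> z = 0" by (simp add: orthogonal_def inner_commute)
        moreover have "g j \<bullet> h = (if j = i then 1 else 0)" using h fd that by auto
        ultimately show ?thesis by (simp add: hyz inner_add_right)
      qed
      then show ?thesis using y by (auto simp: S_def)
    qed simp
  qed
  then obtain b where bS: "\<And>i. i < d \<Longrightarrow> b i \<in> S"
    and bdual: "\<And>i j. i < d \<Longrightarrow> j < d \<Longrightarrow> g j \<bullet> b i = (if j = i then 1 else 0)"
    by metis
  have recon: "w = (\<Sum>i<d. (g i \<bullet> w) *\<^sub>R b i)" if w: "w \<in> S" for w
  proof -
    define w' where "w' = w - (\<Sum>i<d. (g i \<bullet> w) *\<^sub>R b i)"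
    have "w' \<in> S" unfolding w'_def
      by (intro subspace_diff[OF subS w] subspace_sum[OF subS] subspace_scale[OF subS] bS) auto
    moreover have "g j \<bullet> w' = 0" if "j < d" for j
      using dual_sum[of d g b j "\<lambda>i. g i \<bullet> w", OF bdual that] by (simp add: w'_def inner_diff_right)
    ultimately have "orthogonal w' w'"
      by (intro orthogonal_to_span[of w' "g ` {..<d}" w']) (auto simp: S_def orthogonal_def inner_commute)
    then have "w' = 0" by (simp add: orthogonal_def)
    then show ?thesis by (simp add: w'_def)
  qed
  have Phi0: "\<Phi> i xs = 0" if "i < d" for i using MU xsM xsU that by blast
  have contPhi: "isCont (\<Phi> i) xs" if "i < d" for i
    using GG[OF that] xsU has_derivative_continuous by blast
  have contG: "isCont (GG i) xs" if "i < d" for i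
    using GG[OF that] xsU openU continuous_on_eq_continuous_at by blast
  define B where "B = (\<Sum>i<d. norm (b i))"
  have B0: "0 \<le> B" by (simp add: B_def sum_nonneg)
  define \<eta> where "\<eta> = 1 / (2 * (B + 1))"
  have \<eta>0: "0 < \<eta>" using B0 by (simp add: \<eta>_def)
  have \<eta>B: "\<eta> * B \<le> 1/2" using B0 by (simp add: \<eta>_def field_simps)
  define Gs where "Gs \<xi> = (\<Sum>i<d. norm (GG i \<xi> - g i))" for \<xi>
  have cGs: "isCont Gs xs" unfolding Gs_def by (auto intro!: continuous_intros contG)
  have Gs0: "Gs xs = 0" by (simp add: Gs_def g_def)
  obtain \<delta>1 where \<delta>1: "\<delta>1 > 0" "\<And>\<xi>. dist \<xi> xs < \<delta>1 \<Longrightarrow> dist (Gs \<xi>) (Gs xs) < \<eta>"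
    using cGs \<eta>0 unfolding continuous_at_eps_delta by blast
  obtain \<delta>2 where \<delta>2: "\<delta>2 > 0" "ball xs \<delta>2 \<subseteq> U" using openU xsU open_contains_ball by blast
  define \<rho>0 where "\<rho>0 = min \<delta>1 \<delta>2"
  have \<rho>00: "\<rho>0 > 0" using \<delta>1 \<delta>2 by (simp add: \<rho>0_def)
  have ballU: "ball xs \<rho>0 \<subseteq> U" using \<delta>2 by (auto simp: \<rho>0_def)
  have Gbnd: "norm (GG i \<xi> - g i) \<le> \<eta>" if "\<xi> \<in> ball xs \<rho>0" "i < d" for \<xi> i
  proof -
    have le1: "norm (GG i \<xi> - g i) \<le> Gs \<xi>" unfolding Gs_def
      by (rule member_le_sum[of i "{..<d}" "\<lambda>i. norm (GG i \<xi> - g i)"]) (use that in auto)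
    have dx: "dist \<xi> xs < \<delta>1" using that by (simp add: \<rho>0_def dist_commute)
    have "Gs \<xi> < \<eta>" using \<delta>1(2)[OF dx] Gs0 by (simp add: dist_real_def abs_less_iff)
    then show ?thesis using le1 by linarith
  qed
  have mvt: "\<bar>\<Phi> i a1 - \<Phi> i a2 - g i \<bullet> (a1 - a2)\<bar> \<le> \<eta> * norm (a1 - a2)"
    if "i < d" "a1 \<in> ball xs \<rho>0" "a2 \<in> ball xs \<rho>0" for i a1 a2
  proof (rule mvt_lin[OF convex_ball _ _ that(2,3)])
    fix \<xi> assume "\<xi> \<in> ball xs \<rho>0"
    then show "(\<Phi> i has_derivative (\<lambda>h. GG i \<xi> \<bullet> h)) (at \<xi>)" using GG[OF that(1)] ballU by blast
    show "norm (GG i \<xi> - g i) \<le> \<eta>" by (rule Gbnd[OF \<open>\<xi> \<in> ball xs \<rho>0\<close> that(1)])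
  qed
  show ?thesis
  proof (intro exI[of _ S] conjI allI impI)
    show "subspace S" by (rule subS)
    show "S \<subseteq> chart_normal_space xs d \<Phi>" by (rule SN)
    fix \<epsilon> :: real assume \<epsilon>: "\<epsilon> > 0"
    define r where "r = min (\<epsilon>/2) (\<rho>0/3)"
    have r0: "r > 0" using \<epsilon> \<rho>00 by (simp add: r_def)
    define Fs where "Fs y = (\<Sum>i<d. \<bar>\<Phi> i y\<bar> * norm (b i))" for y
    have cFs: "isCont Fs xs" unfolding Fs_def by (auto intro!: continuous_intros contPhi)
    have Fs0: "Fs xs = 0" by (simp add: Fs_def Phi0)
    obtain \<delta>3 where \<delta>3: "\<delta>3 > 0" "\<And>y. dist y xs < \<delta>3 \<Longrightarrow> dist (Fs y) (Fs xs) < r/2"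
      using cFs r0 unfolding continuous_at_eps_delta by (meson half_gt_zero)
    show "\<exists>\<rho>>0. \<forall>y\<in>ball xs \<rho>. \<exists>n\<in>S. y + n \<in> Mf \<and> norm n < \<epsilon>"
    proof (intro exI[of _ "min \<delta>3 (\<rho>0/3)"] conjI ballI)
      show "min \<delta>3 (\<rho>0/3) > 0" using \<delta>3 \<rho>00 by simp
      fix y assume y: "y \<in> ball xs (min \<delta>3 (\<rho>0/3))"
      have Fsy: "Fs y < r/2"
      proof -
        have dy: "dist y xs < \<delta>3" using y by (simp add: dist_commute)
        show ?thesis using \<delta>3(2)[OF dy] Fs0 by (simp add: dist_real_def abs_less_iff)
      qed
      define D where "D = S \<inter> cball 0 r"
      define T where "T n = n - (\<Sum>i<d. \<Phi> i (y + n) *\<^sub>R b i)" for n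
      have inball: "y + n \<in> ball xs \<rho>0" if "n \<in> D" for n
      proof -
        have "norm n \<le> r" using that by (simp add: D_def)
        moreover have "dist xs y < \<rho>0/3" using y by simp
        moreover have "dist xs (y + n) \<le> dist xs y + norm n"
        proof -
          have "dist xs (y + n) = norm ((xs - y) - n)" by (simp add: dist_norm algebra_simps)
          also have "\<dots> \<le> norm (xs - y) + norm n" by (rule norm_triangle_ineq4)
          finally show ?thesis by (simp add: dist_norm)
        qed
        moreover have "r \<le> \<rho>0/3" by (simp add: r_def)
        ultimately have "dist xs (y + n) < \<rho>0" using \<rho>00 by linarith
        then show ?thesis by simp
      qed
      have TS: "T n \<in> S" if "n \<in> S" for n
        unfolding T_def
        by (intro subspace_diff[OF subS that] subspace_sum[OF subS] subspace_scale[OF subS] bS) auto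
      have contr: "norm (T n1 - T n2) \<le> 1/2 * norm (n1 - n2)" if n1: "n1 \<in> D" and n2: "n2 \<in> D" for n1 n2
      proof -
        have n12: "n1 - n2 \<in> S" using n1 n2 subspace_diff[OF subS] by (auto simp: D_def)
        have r12: "n1 - n2 = (\<Sum>i<d. (g i \<bullet> (n1 - n2)) *\<^sub>R b i)" by (rule recon[OF n12])
        define X where "X = (\<Sum>i<d. (\<Phi> i (y + n1) - \<Phi> i (y + n2)) *\<^sub>R b i)"
        have "T n1 - T n2 = (n1 - n2) - X"
          by (simp add: T_def X_def sum_subtractf scaleR_diff_left)
        also have "\<dots> = (\<Sum>i<d. (g i \<bullet> (n1 - n2)) *\<^sub>R b i) - X"
          by (subst r12[symmetric]) (rule refl)
        also have "\<dots> = (\<Sum>i<d. (g i \<bullet> (n1 - n2) - (\<Phi> i (y + n1) - \<Phi> i (y + n2))) *\<^sub>R b i)"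
          by (simp add: X_def sum_subtractf scaleR_diff_left)
        finally have eq: "T n1 - T n2 = (\<Sum>i<d. (g i \<bullet> (n1 - n2) - (\<Phi> i (y + n1) - \<Phi> i (y + n2))) *\<^sub>R b i)" .
        have "norm (T n1 - T n2) \<le> (\<Sum>i<d. norm ((g i \<bullet> (n1 - n2) - (\<Phi> i (y + n1) - \<Phi> i (y + n2))) *\<^sub>R b i))"
          unfolding eq by (rule norm_sum)
        also have "\<dots> \<le> (\<Sum>i<d. (\<eta> * norm (n1 - n2)) * norm (b i))"
        proof (rule sum_mono)
          fix i assume i: "i \<in> {..<d}"
          have "\<bar>\<Phi> i (y + n1) - \<Phi> i (y + n2) - g i \<bullet> ((y + n1) - (y + n2))\<bar> \<le> \<eta> * norm ((y + n1) - (y + n2))"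
            using mvt[of i "y + n1" "y + n2"] i inball[OF n1] inball[OF n2] by simp
          then have "\<bar>g i \<bullet> (n1 - n2) - (\<Phi> i (y + n1) - \<Phi> i (y + n2))\<bar> \<le> \<eta> * norm (n1 - n2)"
            by (simp add: abs_minus_commute)
          then show "norm ((g i \<bullet> (n1 - n2) - (\<Phi> i (y + n1) - \<Phi> i (y + n2))) *\<^sub>R b i) \<le> (\<eta> * norm (n1 - n2)) * norm (b i)"
            by (simp add: mult_right_mono)
        qed
        also have "\<dots> = (\<eta> * B) * norm (n1 - n2)"
          by (simp add: B_def sum_distrib_left sum_distrib_right mult.commute mult.left_commute)
        also have "\<dots> \<le> 1/2 * norm (n1 - n2)" by (rule mult_right_mono[OF \<eta>B norm_ge_zero])
        finally show ?thesis .
      qed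
      have T0: "norm (T 0) \<le> Fs y"
      proof -
        have "norm (T 0) = norm (\<Sum>i<d. \<Phi> i y *\<^sub>R b i)" by (simp add: T_def)
        also have "\<dots> \<le> (\<Sum>i<d. norm (\<Phi> i y *\<^sub>R b i))" by (rule norm_sum)
        also have "\<dots> = Fs y" by (simp add: Fs_def)
        finally show ?thesis .
      qed
      have D0: "0 \<in> D" using r0 subspace_0[OF subS] by (simp add: D_def)
      have TD: "T ` D \<subseteq> D"
      proof
        fix u assume "u \<in> T ` D"
        then obtain n where n: "n \<in> D" and u: "u = T n" by blast
        have "norm (T n) \<le> norm (T n - T 0) + norm (T 0)" using norm_triangle_ineq[of "T n - T 0" "T 0"] by simp
        also have "\<dots> \<le> 1/2 * norm (n - 0) + Fs y" using contr[OF n D0] T0 by simp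
        also have "\<dots> \<le> r" using n Fsy by (simp add: D_def)
        finally show "u \<in> D" using TS n u by (simp add: D_def)
      qed
      have cD: "complete D"
        unfolding complete_eq_closed D_def by (intro closed_Int closed_subspace[OF subS] closed_cball)
      obtain n where nD: "n \<in> D" and fixT: "T n = n"
        using Banach_fix[OF cD _ _ _ TD, of "1/2"] D0 contr by (auto simp: dist_norm)
      have X0: "(\<Sum>i<d. \<Phi> i (y + n) *\<^sub>R b i) = 0" using fixT by (simp add: T_def)
      have "\<Phi> j (y + n) = 0" if "j < d" for j
        using dual_sum[of d g b j "\<lambda>i. \<Phi> i (y + n)", OF bdual that] X0 by simp
      moreover have "y + n \<in> U" using inball[OF nD] ballU by blast
      ultimately have "y + n \<in> Mf" using MU by blast
      moreover have "norm n < \<epsilon>"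
      proof -
        have "norm n \<le> r" using nD by (simp add: D_def)
        then show ?thesis using r_def \<epsilon> by simp
      qed
      moreover have "n \<in> S" using nD by (simp add: D_def)
      ultimately show "\<exists>n\<in>S. y + n \<in> Mf \<and> norm n < \<epsilon>" by blast
    qed
  qed
qed


lemma seq_conv_inv:
  fixes X :: "nat \<Rightarrow> 'a::real_normed_vector"
  assumes "\<And>k. norm (X k - a) < 1 / (real k + 1)"
  shows "X \<longlonglongrightarrow> a"
proof (rule LIMSEQ_I)
  fix r :: real assume r: "r > 0"
  obtain N :: nat where N: "inverse (real (Suc N)) < r" using reals_Archimedean r by blast
  show "\<exists>no. \<forall>n\<ge>no. norm (X n - a) < r"
  proof (intro exI allI impI)
    fix n assume n: "n \<ge> N"
    have "1 / (real n + 1) \<le> inverse (real (Suc N))" using n by (simp add: field_simps)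
    then show "norm (X n - a) < r" using assms[of n] N by linarith
  qed
qed

lemma identification:
  fixes \<Psi> :: "'a::euclidean_space \<Rightarrow> ereal"
  assumes ps: "partly_smooth \<Psi> xs Mf" and vb: "vb \<in> rel_interior (subdiff \<Psi> xs)"
  shows "\<exists>\<eta>>0. \<forall>y v. norm (y - xs) < \<eta> \<and> norm (v - vb) < \<eta> \<and> v \<in> subdiff \<Psi> y \<longrightarrow> y \<in> Mf"
proof -
  from ps obtain U d \<Phi> a where xsM: "xs \<in> Mf" and ch: "C2_manifold_chart Mf xs U d \<Phi>"
    and aff: "affine hull (subdiff \<Psi> xs) = (\<lambda>v. a + v) ` chart_normal_space xs d \<Phi>"
    and cont: "subdiff_continuous_rel \<Psi> xs Mf"
    unfolding partly_smooth_def by blast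
  define N where "N = chart_normal_space xs d \<Phi>"
  obtain S where subS: "subspace S" and SN: "S \<subseteq> N"
    and corr: "\<forall>\<epsilon>>0. \<exists>\<rho>>0. \<forall>y\<in>ball xs \<rho>. \<exists>n\<in>S. y + n \<in> Mf \<and> norm n < \<epsilon>"
    using chart_correction[OF ch xsM] unfolding N_def by blast
  from corr obtain R where R: "\<And>\<epsilon>. \<epsilon> > 0 \<Longrightarrow> R \<epsilon> > 0 \<and> (\<forall>y\<in>ball xs (R \<epsilon>). \<exists>n\<in>S. y + n \<in> Mf \<and> norm n < \<epsilon>)"
    by metis
  from vb obtain e where e: "e > 0" and vbS: "vb \<in> subdiff \<Psi> xs"
    and eb: "ball vb e \<inter> affine hull (subdiff \<Psi> xs) \<subseteq> subdiff \<Psi> xs"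
    unfolding mem_rel_interior_ball by blast
  have Nclos: "u - c *\<^sub>R w \<in> N" if "u \<in> N" "w \<in> N" for u w c
    using that unfolding N_def chart_normal_space_def by (simp add: inner_diff_left)
  have "vb \<in> affine hull (subdiff \<Psi> xs)" using vbS by (rule hull_inc)
  then obtain n0 where n0: "n0 \<in> N" and vba: "vb = a + n0" unfolding aff N_def by blast
  have wsub: "vb - (e/2) *\<^sub>R dd \<in> subdiff \<Psi> xs" if dS: "dd \<in> S" and d1: "norm dd = 1" for dd
  proof -
    have "n0 - (e/2) *\<^sub>R dd \<in> N" using Nclos[OF n0] dS SN by blast
    then have "vb - (e/2) *\<^sub>R dd \<in> affine hull (subdiff \<Psi> xs)"
      unfolding aff N_def[symmetric] by (auto simp: vba intro!: image_eqI[of _ _ "n0 - (e/2) *\<^sub>R dd"])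
    moreover have "vb - (e/2) *\<^sub>R dd \<in> ball vb e" using e d1 by (simp add: dist_norm)
    ultimately show ?thesis using eb by blast
  qed
  show ?thesis
  proof (rule ccontr)
    assume "\<not> ?thesis"
    then have H: "\<And>\<eta>. \<eta> > 0 \<Longrightarrow> \<exists>y v. norm (y - xs) < \<eta> \<and> norm (v - vb) < \<eta> \<and> v \<in> subdiff \<Psi> y \<and> y \<notin> Mf"
      by blast
    define \<eta> where "\<eta> k = min (1 / (real k + 1)) (R (1 / (real k + 1)))" for k
    have \<eta>0: "\<eta> k > 0" for k using R[of "1 / (real k + 1)"] by (simp add: \<eta>_def)
    have "\<forall>k. \<exists>y v. norm (y - xs) < \<eta> k \<and> norm (v - vb) < \<eta> k \<and> v \<in> subdiff \<Psi> y \<and> y \<notin> Mf"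
      using H \<eta>0 by blast
    then obtain Y V where YV: "\<And>k. norm (Y k - xs) < \<eta> k \<and> norm (V k - vb) < \<eta> k \<and> V k \<in> subdiff \<Psi> (Y k) \<and> Y k \<notin> Mf"
      by metis
    have Yb: "Y k \<in> ball xs (R (1 / (real k + 1)))" for k
      using YV[of k] by (simp add: \<eta>_def dist_norm norm_minus_commute)
    have "\<forall>k. \<exists>n\<in>S. Y k + n \<in> Mf \<and> norm n < 1 / (real k + 1)"
    proof
      fix k
      have p: "1 / (real k + 1) > 0" by simp
      show "\<exists>n\<in>S. Y k + n \<in> Mf \<and> norm n < 1 / (real k + 1)"
        using R[OF p] Yb[of k] by blast
    qed
    then obtain Nn where Nn: "\<And>k. Nn k \<in> S \<and> Y k + Nn k \<in> Mf \<and> norm (Nn k) < 1 / (real k + 1)"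
      by metis
    define Z where "Z k = Y k + Nn k" for k
    have Ylim: "Y \<longlonglongrightarrow> xs" by (rule seq_conv_inv) (use YV \<eta>_def in \<open>smt (verit) min_le_iff_disj\<close>)
    have Vlim: "V \<longlonglongrightarrow> vb" by (rule seq_conv_inv) (use YV \<eta>_def in \<open>smt (verit) min_le_iff_disj\<close>)
    have Nlim: "Nn \<longlonglongrightarrow> 0" by (rule seq_conv_inv) (use Nn in simp)
    have Zlim: "Z \<longlonglongrightarrow> xs" unfolding Z_def using tendsto_add[OF Ylim Nlim] by simp
    have Nn0: "Nn k \<noteq> 0" for k using Nn[of k] YV[of k] by auto
    define Dd where "Dd k = (1 / norm (Nn k)) *\<^sub>R Nn k" for k
    have Dsph: "Dd k \<in> sphere 0 1" for k using Nn0[of k] by (simp add: Dd_def)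
    have DS: "Dd k \<in> S" for k using Nn[of k] subspace_scale[OF subS] by (simp add: Dd_def)
    obtain l \<phi> where l: "l \<in> sphere 0 1" and \<phi>: "strict_mono (\<phi> :: nat \<Rightarrow> nat)" and Dlim: "(Dd \<circ> \<phi>) \<longlonglongrightarrow> l"
      using seq_compactE[OF compact_imp_seq_compact[OF compact_sphere], of Dd 0 1] Dsph by blast
    have lS: "l \<in> S"
      by (rule closed_sequentially[OF closed_subspace[OF subS] _ Dlim]) (simp add: DS)
    have l1: "norm l = 1" using l by simp
    define w where "w = vb - (e/2) *\<^sub>R l"
    have wS: "w \<in> subdiff \<Psi> xs" unfolding w_def by (rule wsub[OF lS l1])
    have ZM: "\<forall>k. (Z \<circ> \<phi>) k \<in> Mf" using Nn by (simp add: Z_def)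
    have Zphi: "(Z \<circ> \<phi>) \<longlonglongrightarrow> xs" by (rule LIMSEQ_subseq_LIMSEQ[OF Zlim \<phi>])
    from cont ZM Zphi wS obtain W where Wlim: "W \<longlonglongrightarrow> w"
      and ev: "\<forall>\<^sub>F k in sequentially. W k \<in> subdiff \<Psi> ((Z \<circ> \<phi>) k)"
      unfolding subdiff_continuous_rel_def by blast
    have ev2: "\<forall>\<^sub>F k in sequentially. 0 \<le> (W k - V (\<phi> k)) \<bullet> Dd (\<phi> k)"
      using ev
    proof (rule eventually_mono)
      fix k assume Wk: "W k \<in> subdiff \<Psi> ((Z \<circ> \<phi>) k)"
      have "0 \<le> (W k - V (\<phi> k)) \<bullet> (Z (\<phi> k) - Y (\<phi> k))"
        using subdiff_mono[OF Wk[simplified] conjunct1[OF conjunct2[OF conjunct2[OF YV]]]] by simp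
      then have "0 \<le> (W k - V (\<phi> k)) \<bullet> Nn (\<phi> k)" by (simp add: Z_def)
      then show "0 \<le> (W k - V (\<phi> k)) \<bullet> Dd (\<phi> k)" by (simp add: Dd_def)
    qed
    have lim: "(\<lambda>k. (W k - V (\<phi> k)) \<bullet> Dd (\<phi> k)) \<longlonglongrightarrow> (w - vb) \<bullet> l"
    proof (intro tendsto_inner tendsto_diff Wlim)
      show "(\<lambda>k. V (\<phi> k)) \<longlonglongrightarrow> vb" using LIMSEQ_subseq_LIMSEQ[OF Vlim \<phi>] by (simp add: comp_def)
      show "(\<lambda>k. Dd (\<phi> k)) \<longlonglongrightarrow> l" using Dlim by (simp add: comp_def)
    qed
    have "0 \<le> (w - vb) \<bullet> l" by (rule tendsto_lowerbound[OF lim ev2 trivial_limit_sequentially])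
    moreover have "(w - vb) \<bullet> l = - (e/2)"
      using l1 by (simp add: w_def inner_commute power2_norm_eq_inner[symmetric])
    ultimately show False using e by simp
  qed
qed

theorem theorem1:
  fixes f :: "'a::euclidean_space \<Rightarrow> real"
    and gradf :: "'a \<Rightarrow> 'a"
    and \<Psi> :: "'a \<Rightarrow> ereal"
    and \<gamma> \<beta> m M L :: real
    and x p :: "nat \<Rightarrow> 'a"
    and H :: "nat \<Rightarrow> 'a \<Rightarrow> 'a"
    and eps alpha :: "nat \<Rightarrow> real"
    and xs :: 'a
    and Mf :: "'a set"
  assumes f_grad: "\<And>y. (f has_derivative (\<lambda>h. gradf y \<bullet> h)) (at y)"
    and gradf_cont: "continuous_on UNIV gradf"
    and gradf_lip: "\<exists>Lg. \<forall>u v. norm (gradf u - gradf v) \<le> Lg * norm (u - v)"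
    and Psi_proper: "proper_fun \<Psi>"
    and Psi_convex: "convex_ext \<Psi>"
    and Psi_lsc: "lsc_ext \<Psi>"
    and sol_exists: "\<exists>z. \<forall>y. ereal (f z) + \<Psi> z \<le> ereal (f y) + \<Psi> y"
    and params: "0 < \<gamma>" "\<gamma> < 1" "0 < \<beta>" "\<beta> < 1"
    and x0_dom: "\<Psi> (x 0) < \<infinity>"
    and H_lin: "\<And>t. linear (H t)"
    and H_sym: "\<And>t u v. H t u \<bullet> v = u \<bullet> H t v"
    and H_psd: "\<And>t v. 0 \<le> v \<bullet> H t v"
    and mM: "0 < m" "m \<le> M"
    and H_bounds: "\<And>t v. m * (v \<bullet> v) \<le> v \<bullet> H t v \<and> v \<bullet> H t v \<le> M * (v \<bullet> v)"
    and eps_nonneg: "\<And>t. 0 \<le> eps t"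
    and inexact: "\<And>t. \<exists>r. min_norm_elem r (subdiff (isqa_Q gradf \<Psi> (x t) (H t)) (p t))
                          \<and> norm r \<le> eps t"
    and linesearch: "\<And>t. \<exists>k::nat. alpha t = \<beta> ^ k \<and>
         ereal (f (x t + \<beta> ^ k *\<^sub>R p t)) + \<Psi> (x t + \<beta> ^ k *\<^sub>R p t)
           \<le> ereal (f (x t)) + \<Psi> (x t) + ereal (\<gamma> * \<beta> ^ k) * isqa_Q gradf \<Psi> (x t) (H t) (p t) \<and>
         (\<forall>j<k. \<not> (ereal (f (x t + \<beta> ^ j *\<^sub>R p t)) + \<Psi> (x t + \<beta> ^ j *\<^sub>R p t)
           \<le> ereal (f (x t)) + \<Psi> (x t) + ereal (\<gamma> * \<beta> ^ j) * isqa_Q gradf \<Psi> (x t) (H t) (p t)))"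
    and update: "\<And>t. x (Suc t) = x t + alpha t *\<^sub>R p t"
    and relint: "0 \<in> rel_interior ((\<lambda>g. gradf xs + g) ` subdiff \<Psi> xs)"
    and psmooth: "partly_smooth \<Psi> xs Mf"
    and Lpos: "0 < L"
    and Lsmooth: "\<exists>\<rho>>0. \<forall>u\<in>ball xs \<rho>. \<forall>v\<in>ball xs \<rho>. norm (gradf u - gradf v) \<le> L * norm (u - v)"
  shows "\<exists>\<epsilon>>0. \<exists>\<delta>>0. \<forall>t. norm (x t - xs) \<le> \<delta> \<and> eps t \<le> \<epsilon> \<and> alpha t = 1 \<longrightarrow> x (Suc t) \<in> Mf"
proof -
  obtain Lg0 where Lg0: "\<forall>u v. norm (gradf u - gradf v) \<le> Lg0 * norm (u - v)" using gradf_lip by blast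
  define Lg where "Lg = \<bar>Lg0\<bar>"
  have Lg_nn: "0 \<le> Lg" by (simp add: Lg_def)
  have lip: "norm (gradf u - gradf v) \<le> Lg * norm (u - v)" for u v
  proof -
    have "Lg0 * norm (u - v) \<le> Lg * norm (u - v)" by (simp add: Lg_def mult_right_mono)
    then show ?thesis using Lg0 by (meson order.trans)
  qed
  have nm: "\<And>y. \<Psi> y \<noteq> -\<infinity>" using Psi_proper by (simp add: proper_fun_def)
  have fin: "\<bar>\<Psi> (x t)\<bar> < \<infinity>" for t
  proof (induct t)
    case 0
    then show ?case using x0_dom nm[of "x 0"] by (cases "\<Psi> (x 0)") auto
  next
    case (Suc t)
    obtain r where "min_norm_elem r (subdiff (isqa_Q gradf \<Psi> (x t) (H t)) (p t))" using inexact by blast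
    then have "\<bar>isqa_Q gradf \<Psi> (x t) (H t) (p t)\<bar> < \<infinity>" by (simp add: min_norm_elem_def subdiff_def)
    then obtain q where q: "isqa_Q gradf \<Psi> (x t) (H t) (p t) = ereal q" by (cases "isqa_Q gradf \<Psi> (x t) (H t) (p t)") auto
    obtain c where c: "\<Psi> (x t) = ereal c" using Suc by (cases "\<Psi> (x t)") auto
    obtain k :: nat where ak: "alpha t = \<beta> ^ k"
      and ls: "ereal (f (x t + \<beta> ^ k *\<^sub>R p t)) + \<Psi> (x t + \<beta> ^ k *\<^sub>R p t)
           \<le> ereal (f (x t)) + \<Psi> (x t) + ereal (\<gamma> * \<beta> ^ k) * isqa_Q gradf \<Psi> (x t) (H t) (p t)"
      using linesearch[of t] by blast
    have xs1: "x (Suc t) = x t + \<beta> ^ k *\<^sub>R p t" using update[of t] ak by simp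
    have "\<Psi> (x (Suc t)) \<noteq> \<infinity>"
    proof
      assume "\<Psi> (x (Suc t)) = \<infinity>"
      then show False using ls by (simp add: xs1 c q)
    qed
    then show ?case using nm[of "x (Suc t)"] by (cases "\<Psi> (x (Suc t))") auto
  qed
  from relint have "0 \<in> (\<lambda>g. gradf xs + g) ` rel_interior (subdiff \<Psi> xs)"
    using rel_interior_translation[of "gradf xs" "subdiff \<Psi> xs"] by simp
  then have vbR: "- gradf xs \<in> rel_interior (subdiff \<Psi> xs)"
    by (auto simp: add_eq_0_iff)
  then have gs: "- gradf xs \<in> subdiff \<Psi> xs" using rel_interior_subset by blast
  obtain \<eta> where \<eta>: "\<eta> > 0"
    and ident: "\<And>y v. norm (y - xs) < \<eta> \<Longrightarrow> norm (v - (- gradf xs)) < \<eta> \<Longrightarrow> v \<in> subdiff \<Psi> y \<Longrightarrow> y \<in> Mf"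
    using identification[OF psmooth vbR] by blast
  have m0: "0 < m" and M0: "0 \<le> M" using mM by auto
  define A where "A = 1 + Lg + M"
  have A0: "0 < A" using Lg_nn M0 by (simp add: A_def)
  define K where "K = A + A / m + M * A / m + M + 1"
  have Am0: "0 < A / m" using A0 m0 by simp
  have MAm: "0 \<le> M * A / m" using A0 m0 M0 by simp
  have AmK: "A / m < K" using A0 Am0 MAm M0 by (simp add: K_def)
  have K2: "1 + Lg + M + M * A / m < K" using Am0 M0 by (simp add: K_def A_def)
  have K0: "0 < K" using AmK A0 m0 by (smt (verit) divide_pos_pos)
  define \<kappa> where "\<kappa> = \<eta> / K"
  have \<kappa>0: "0 < \<kappa>" using \<eta> K0 by (simp add: \<kappa>_def)
  have \<kappa>K: "\<kappa> * K = \<eta>" using K0 by (simp add: \<kappa>_def)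
  show ?thesis
  proof (intro exI[of _ \<kappa>] conjI \<kappa>0 allI impI)
    fix t assume asm: "norm (x t - xs) \<le> \<kappa> \<and> eps t \<le> \<kappa> \<and> alpha t = 1"
    then have dd: "norm (x t - xs) \<le> \<kappa>" and et: "eps t \<le> \<kappa>" and a1: "alpha t = 1" by auto
    obtain r where rmin: "min_norm_elem r (subdiff (isqa_Q gradf \<Psi> (x t) (H t)) (p t))" and rn: "norm r \<le> eps t"
      using inexact by blast
    have rsub: "r \<in> subdiff (isqa_Q gradf \<Psi> (x t) (H t)) (p t)" using rmin by (simp add: min_norm_elem_def)
    have Hm: "\<And>v. m * (v \<bullet> v) \<le> v \<bullet> H t v" and HM: "\<And>v. v \<bullet> H t v \<le> M * (v \<bullet> v)" using H_bounds by auto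
    have usub: "r - gradf (x t) - H t (p t) \<in> subdiff \<Psi> (x t + p t)"
      by (rule Q_subgrad[OF Psi_convex Psi_proper H_lin H_sym H_psd fin rsub])
    note bnds = isqa_bounds[OF H_lin H_sym H_psd m0 M0 Hm HM Lg_nn lip usub gs]
    define ne where "ne = norm (x t + p t - xs)"
    have r\<kappa>: "norm r \<le> \<kappa>" using rn et by simp
    have "(Lg + M) * norm (x t - xs) \<le> (Lg + M) * \<kappa>" using dd Lg_nn M0 by (simp add: mult_left_mono)
    then have "m * ne \<le> \<kappa> * A" using bnds(1) r\<kappa> unfolding ne_def A_def by (simp add: algebra_simps)
    then have ne_le: "ne \<le> \<kappa> * (A / m)" using m0 by (simp add: field_simps)
    have ne_lt: "ne < \<eta>"
    proof -
      have "\<kappa> * (A / m) < \<kappa> * K" using AmK \<kappa>0 by (rule mult_strict_left_mono)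
      then show ?thesis using ne_le \<kappa>K by linarith
    qed
    have "M * (ne + norm (x t - xs)) \<le> M * (\<kappa> * (A / m) + \<kappa>)" using ne_le dd M0 by (simp add: mult_left_mono)
    moreover have "Lg * norm (x t - xs) \<le> Lg * \<kappa>" using dd Lg_nn by (simp add: mult_left_mono)
    ultimately have "norm ((r - gradf (x t) - H t (p t)) - (- gradf xs)) \<le> \<kappa> * (1 + Lg + M + M * A / m)"
      using bnds(2) r\<kappa> unfolding ne_def by (simp add: algebra_simps)
    also have "\<dots> < \<kappa> * K" using K2 \<kappa>0 by (rule mult_strict_left_mono)
    finally have u_lt: "norm ((r - gradf (x t) - H t (p t)) - (- gradf xs)) < \<eta>" using \<kappa>K by simp
    have "x t + p t \<in> Mf" by (rule ident[OF ne_lt[unfolded ne_def] u_lt usub])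
    then show "x (Suc t) \<in> Mf" using update[of t] a1 by simp
  qed
qed


end
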